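(* Let $p$ be an odd prime, $\alpha>1$ an integer with $\gcd(p,\alpha)=1$, $\gamma=\operatorname{ord}_p(\alpha)$, and let $s,t\geq 0$ be integers. Then $$S_p^1(s\gamma p^t)\leq s\,\theta\left(\frac{p+1}{2}\right)^t .$$
   Context: A base-$p$ digit $d\in\{0,\dots,p-1\}$ is called small if $d<p/2$ and large otherwise. Let $\delta=\{\alpha^j \bmod p : j\in\mathbb{Z}\}$ be the set of residues in $\{0,\dots,p-1\}$ generated by $\alpha$ modulo $p$, and $\theta=\#\{x\in\delta: 0\le x<p/2\}$ the number of small residues in $\delta$. For integers $a,n\ge1$, $S_p^n(a)=\#\{0\le s<a : \text{the base-}p\text{ representation of }\alpha^s\text{ contains fewer than } n \text{ large digits}\}$ (this depends on the fixed $\alpha$). *)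

theory Defs
  imports Complex_Main "HOL-Number_Theory.Number_Theory"
begin

fun base_digits :: "nat \<Rightarrow> nat \<Rightarrow> nat list" where
  "base_digits b n = (if b < 2 \<or> n = 0 then [] else n mod b # base_digits b (n div b))"

definition large_digit :: "nat \<Rightarrow> nat \<Rightarrow> bool" where
  "large_digit p d \<longleftrightarrow> real d \<ge> real p / 2"

definition num_large_digits :: "nat \<Rightarrow> nat \<Rightarrow> nat" where
  "num_large_digits p n = length (filter (large_digit p) (base_digits p n))"

(* delta = { alpha^j mod p : j \<in> Z }, negative powers being modular inverses *)
definition delta_set :: "nat \<Rightarrow> nat \<Rightarrow> nat set" where
  "delta_set p \<alpha> = {x. x < p \<and> (\<exists>j::int.
      (if j \<ge> 0 then [\<alpha> ^ nat j = x] (mod p) else [x * \<alpha> ^ nat (- j) = 1] (mod p)))}"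

definition theta :: "nat \<Rightarrow> nat \<Rightarrow> nat" where
  "theta p \<alpha> = card {x \<in> delta_set p \<alpha>. real x < real p / 2}"

definition S_count :: "nat \<Rightarrow> nat \<Rightarrow> nat \<Rightarrow> nat \<Rightarrow> nat" where
  "S_count p \<alpha> n a = card {s. s < a \<and> num_large_digits p (\<alpha> ^ s) < n}"

end

theory Submission
  imports Defs
begin

lemma lte_step:
  fixes p a w :: nat
  assumes p: "prime p" "odd p" and a: "a \<ge> 1"
  shows "\<exists>c. (1 + p^a * w)^p = 1 + p^(a+1) * w + p^(a+2) * c"
proof -
  have p2: "p > 2" using p prime_gt_1_nat[of p] by (cases "p = 2") auto
  define f where "f i = (p choose i) * w ^ i * p ^ (i * a)" for i
  have eq: "(1 + p^a * w)^p = (\<Sum>i\<le>p. f i)"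
    unfolding f_def by (subst add.commute, subst binomial) (simp_all add: mult_ac power_mult_distrib power_mult [symmetric])
  have dv: "p^(a+2) dvd f i" if "i \<in> {2..p}" for i
  proof (cases "i = 2")
    case True
    have "f i = p * (p - 1) div 2 * w\<^sup>2 * p ^ (2 * a)"
      using choose_two[of p] True by (simp add: f_def)
    also have "p * (p - 1) div 2 = (p - 1) div 2 * p"
      using \<open>odd p\<close> by (auto elim!: oddE)
    also have "\<dots> * w\<^sup>2 * p ^ (2 * a) = (p - 1) div 2 * w\<^sup>2 * p ^ (2 * a + 1)"
      by (simp add: algebra_simps)
    also have "p ^ (a+2) dvd (p - 1) div 2 * w\<^sup>2 * p ^ (2 * a + 1)"
      using a by (intro dvd_mult le_imp_power_dvd) auto
    finally show ?thesis .
  next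
    case False
    with that have i: "i \<ge> 3" by auto
    have "a + 2 \<le> 3 * a" using a by simp
    also have "3 * a \<le> i * a" using i by (intro mult_right_mono) auto
    finally show ?thesis unfolding f_def by (intro dvd_mult le_imp_power_dvd)
  qed
  define g where "g i = f i div p^(a+2)" for i
  have fg: "f i = p^(a+2) * g i" if "i \<in> {2..p}" for i
    using dv[OF that] unfolding g_def by simp
  have split: "{..p} = {0,1} \<union> {2..p}" using p2 by auto
  have "(\<Sum>i\<le>p. f i) = f 0 + f 1 + (\<Sum>i\<in>{2..p}. f i)"
    by (subst split, subst sum.union_disjoint) auto
  also have "(\<Sum>i\<in>{2..p}. f i) = p^(a+2) * (\<Sum>i\<in>{2..p}. g i)"
    by (simp add: fg sum_distrib_left)
  also have "f 0 = 1" by (simp add: f_def)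
  also have "f 1 = p^(a+1) * w" by (simp add: f_def)
  finally have "(\<Sum>i\<le>p. f i) = 1 + p ^ (a + 1) * w + p ^ (a + 2) * (\<Sum>i\<in>{2..p}. g i)" .
  then show ?thesis using eq by (intro exI[of _ "\<Sum>i\<in>{2..p}. g i"]) simp
qed

lemma lte_iter:
  fixes p e u :: nat
  assumes p: "prime p" "odd p" and e: "e \<ge> 1"
  shows "\<exists>c. (1 + p^e * u)^(p^j) = 1 + p^(e+j) * u + p^(e+j+1) * c"
proof (induction j)
  case 0
  show ?case by (rule exI[of _ 0]) simp
next
  case (Suc j)
  then obtain c where c: "(1 + p^e * u)^(p^j) = 1 + p^(e+j) * u + p^(e+j+1) * c" by blast
  have "(1 + p^e * u)^(p^Suc j) = ((1 + p^e * u)^(p^j))^p"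
    by (simp add: power_mult[symmetric] mult.commute)
  also have "\<dots> = (1 + p^(e+j) * (u + p * c))^p"
    by (simp only: c) (simp add: algebra_simps)
  finally have 1: "(1 + p^e * u)^(p^Suc j) = (1 + p^(e+j) * (u + p * c))^p" .
  obtain c' where "(1 + p^(e+j) * (u + p * c))^p = 1 + p^(e+j+1) * (u + p*c) + p^(e+j+2) * c'"
    using lte_step[OF p, of "e+j" "u + p*c"] e by auto
  with 1 have "(1 + p^e * u)^(p^Suc j) = 1 + p^(e+Suc j) * u + p^(e+Suc j+1) * (c + c')"
    by (simp add: algebra_simps)
  then show ?case by blast
qed

lemma ord_beta:
  fixes p e u t :: nat
  assumes p: "prime p" "odd p" and e: "e \<ge> 1" and u: "\<not> p dvd u"
  shows "ord (p^(e+t)) (1 + p^e * u) = p^t"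
proof -
  have p1: "p > 1" using p prime_gt_1_nat by auto
  define \<beta> where "\<beta> = 1 + p^e * u"
  obtain c where c: "\<beta>^(p^t) = 1 + p^(e+t) * (u + p * c)"
    using lte_iter[OF p e, of u t] unfolding \<beta>_def by (auto simp: algebra_simps)
  have "[1 + p^(e+t) * (u + p * c) = 1 + 0] (mod p^(e+t))"
    by (intro cong_add) (auto simp: cong_0_iff)
  hence "[\<beta>^(p^t) = 1] (mod p^(e+t))"
    unfolding c by simp
  hence "ord (p^(e+t)) \<beta> dvd p^t" by (simp add: ord_divides')
  then obtain b where b: "b \<le> t" "ord (p^(e+t)) \<beta> = p^b"
    using divides_primepow_nat[OF p(1)] by auto
  have "b = t"
  proof (rule ccontr)
    assume "b \<noteq> t"
    with b have bt: "b \<le> t - 1" "t \<ge> 1" by auto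
    have "ord (p^(e+t)) \<beta> dvd p^(t-1)" using b bt by (simp add: le_imp_power_dvd)
    hence cg: "[\<beta>^(p^(t-1)) = 1] (mod p^(e+t))" by (simp add: ord_divides')
    obtain c where c: "\<beta>^(p^(t-1)) = 1 + p^(e+(t-1)) * u + p^(e+(t-1)+1) * c"
      using lte_iter[OF p e, of u "t-1"] unfolding \<beta>_def by auto
    have et: "e + (t-1) + 1 = e + t" using bt by simp
    from cg have "[1 + (p^(e+(t-1)) * u + p^(e+t) * c) = 1 + 0] (mod p^(e+t))"
      unfolding c et by (simp add: add.assoc)
    hence "[p^(e+(t-1)) * u + p^(e+t) * c = 0] (mod p^(e+t))"
      using cong_add_lcancel_nat by blast
    hence "p^(e+t) dvd p^(e+(t-1)) * u + p^(e+t) * c" by (simp add: cong_0_iff)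
    hence "p^(e+t) dvd p^(e+(t-1)) * u" by (simp add: dvd_add_left_iff)
    hence "p^(e+(t-1)) * p dvd p^(e+(t-1)) * u"
      using et by (metis power_add power_one_right)
    hence "p dvd u" using p1 by (simp add: dvd_mult_cancel_left)
    with u show False by contradiction
  qed
  with b show ?thesis unfolding \<beta>_def by simp
qed

declare base_digits.simps[simp del]

definition dig :: "nat \<Rightarrow> nat \<Rightarrow> nat \<Rightarrow> nat" where
  "dig p n i = n div p^i mod p"

lemma dig_in_digits:
  "p \<ge> 2 \<Longrightarrow> dig p n i = 0 \<or> dig p n i \<in> set (base_digits p n)"
proof (induction p n arbitrary: i rule: base_digits.induct)
  case (1 b n)
  show ?case
  proof (cases "n = 0")
    case True then show ?thesis by (simp add: dig_def)
  next
    case False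
    have bd: "base_digits b n = n mod b # base_digits b (n div b)"
      using False 1(2) by (subst base_digits.simps) simp
    show ?thesis
    proof (cases i)
      case 0 then show ?thesis by (simp add: dig_def bd)
    next
      case (Suc j)
      have "dig b n i = dig b (n div b) j"
        by (simp add: dig_def Suc div_mult2_eq)
      with 1(1)[of j] False 1(2) show ?thesis by (auto simp: bd)
    qed
  qed
qed

lemma dig_small:
  assumes "p \<ge> 2" "num_large_digits p n < 1"
  shows "2 * dig p n i < p"
proof -
  have "\<forall>d\<in>set (base_digits p n). \<not> large_digit p d"
    using assms(2) unfolding num_large_digits_def by (simp add: filter_empty_conv)
  hence "\<forall>d\<in>set (base_digits p n). 2 * d < p"
    by (auto simp: large_digit_def)
  with dig_in_digits[OF assms(1), of n i] assms(1) show ?thesis by auto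
qed

lemma dig_mod:
  assumes "p > 0" "i < m"
  shows "dig p (n mod p^m) i = dig p n i"
proof -
  have m: "p^m = p^i * p^(m-i)" using assms by (simp add: power_add[symmetric])
  have "n mod p^m div p^i = n div p^i mod p^(m-i)"
    unfolding m mod_mult2_eq using assms by simp
  moreover have "p dvd p^(m-i)" using assms by simp
  ultimately show ?thesis unfolding dig_def by (simp add: mod_mod_cancel)
qed

lemma dig_eq_mod:
  assumes "p > 0" "\<forall>i<m. dig p a i = dig p b i"
  shows "a mod p^m = b mod p^m"
  using assms(2)
proof (induction m arbitrary: a b)
  case 0 then show ?case by simp
next
  case (Suc m)
  have h0: "a mod p = b mod p" using Suc.prems[rule_format, of 0] by (simp add: dig_def)
  have "\<forall>i<m. dig p (a div p) i = dig p (b div p) i"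
    using Suc.prems by (auto simp: dig_def div_mult2_eq[symmetric] simp flip: power_Suc)
  hence "a div p mod p^m = b div p mod p^m" by (rule Suc.IH)
  thus ?case using h0 by (simp add: mod_mult2_eq)
qed


lemma card_R_le:
  fixes p \<alpha> :: nat
  assumes p1: "p > 1" and cop: "coprime p \<alpha>"
  shows "card {r. r < ord p \<alpha> \<and> 2 * (\<alpha>^r mod p) < p} \<le> theta p \<alpha>"
  unfolding theta_def
proof (rule card_inj_on_le)
  show "inj_on (\<lambda>r. \<alpha>^r mod p) {r. r < ord p \<alpha> \<and> 2 * (\<alpha>^r mod p) < p}"
  proof (rule inj_onI)
    fix x y assume x: "x \<in> {r. r < ord p \<alpha> \<and> 2 * (\<alpha>^r mod p) < p}"
      and y: "y \<in> {r. r < ord p \<alpha> \<and> 2 * (\<alpha>^r mod p) < p}"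
      and eq: "\<alpha>^x mod p = \<alpha>^y mod p"
    hence "[\<alpha>^x = \<alpha>^y] (mod p)" by (simp add: cong_def)
    hence "[x = y] (mod ord p \<alpha>)" using order_divides_expdiff[OF cop] by simp
    thus "x = y" using x y cong_less_modulus_unique_nat by auto
  qed
  show "(\<lambda>r. \<alpha>^r mod p) ` {r. r < ord p \<alpha> \<and> 2 * (\<alpha>^r mod p) < p}
        \<subseteq> {x \<in> delta_set p \<alpha>. real x < real p / 2}"
  proof clarify
    fix r assume r: "r < ord p \<alpha>" "2 * (\<alpha>^r mod p) < p"
    have "\<alpha>^r mod p < p" using p1 by simp
    moreover have "(if (int r) \<ge> 0 then [\<alpha> ^ nat (int r) = \<alpha>^r mod p] (mod p)
                    else [\<alpha>^r mod p * \<alpha> ^ nat (- (int r)) = 1] (mod p))"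
      by (simp add: cong_def)
    ultimately have "\<alpha>^r mod p \<in> delta_set p \<alpha>" unfolding delta_set_def by blast
    moreover have "real (\<alpha>^r mod p) < real p / 2" using r(2) by linarith
    ultimately show "\<alpha>^r mod p \<in> delta_set p \<alpha> \<and> real (\<alpha>^r mod p) < real p / 2" by blast
  qed
  show "finite {x \<in> delta_set p \<alpha>. real x < real p / 2}"
    by (rule finite_subset[of _ "{..<p}"]) (auto simp: delta_set_def)
qed

theorem lemma2p5:
  fixes p \<alpha> s t :: nat
  assumes "prime p" and "odd p" and "\<alpha> > 1" and "gcd p \<alpha> = 1"
  shows "real (S_count p \<alpha> 1 (s * ord p \<alpha> * p ^ t))
           \<le> real s * real (theta p \<alpha>) * ((real p + 1) / 2) ^ t"
proof -
  have p1: "p > 1" using prime_gt_1_nat[OF assms(1)] .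
  have cop: "coprime p \<alpha>" using assms(4) coprime_iff_gcd_eq_1 by blast
  define \<gamma> where "\<gamma> = ord p \<alpha>"
  have \<gamma>0: "\<gamma> > 0" unfolding \<gamma>_def using cop ord_gt_0_iff by blast
  have "[\<alpha>^\<gamma> = 1] (mod p)" unfolding \<gamma>_def by (rule ord)
  moreover have "1 \<le> \<alpha>^\<gamma>" using assms(3) by simp
  ultimately obtain v where v: "\<alpha>^\<gamma> = v * p + 1" using cong_le_nat by blast
  have "\<alpha>^\<gamma> > 1" using assms(3) \<gamma>0 by (rule one_less_power)
  hence vnz: "v \<noteq> 0" using v by auto
  have nu: "\<not> is_unit p" using p1 by simp
  obtain u where u: "v = p ^ multiplicity p v * u" "\<not> p dvd u"
    by (rule multiplicity_decompose'[OF vnz nu])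
  define m where "m = multiplicity p v"
  have vm: "v = p^m * u" using u(1) unfolding m_def .
  define e where "e = Suc m"
  have e1: "e \<ge> 1" unfolding e_def by simp
  define \<beta> where "\<beta> = 1 + p^e * u"
  have \<beta>: "\<alpha>^\<gamma> = \<beta>" unfolding \<beta>_def e_def using v vm
    by (simp add: algebra_simps)
  define N where "N = p^(e+t)"
  define M where "M = \<gamma> * p^t"
  have ordb: "ord N \<beta> = p^t" unfolding N_def \<beta>_def
    by (rule ord_beta[OF assms(1,2) e1 u(2)])
  have copN: "coprime N \<alpha>" unfolding N_def using cop by simp
  have copNb: "coprime N \<beta>" unfolding \<beta>[symmetric] using copN by simp
  have "[\<beta>^(p^t) = 1] (mod N)" using ordb by (simp add: ord_divides')
  hence "[\<alpha>^M = 1] (mod N)" unfolding M_def using \<beta> by (simp add: power_mult)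
  hence ordM: "ord N \<alpha> dvd M" by (simp add: ord_divides')
  have red: "[\<alpha>^k = \<alpha>^(k mod M)] (mod N)" for k
  proof -
    have "[k = k mod M] (mod M)" by (simp add: cong_def)
    hence "[k = k mod M] (mod ord N \<alpha>)" using ordM cong_dvd_modulus_nat by blast
    thus ?thesis using order_divides_expdiff[OF copN] by simp
  qed
  have split: "\<alpha>^(\<gamma> * q + r) = \<beta>^q * \<alpha>^r" for q r
    by (simp add: power_add power_mult \<beta>)
  have b1: "[\<beta> = 1] (mod p^e)"
  proof -
    have "[1 + p^e * u = 1 + 0] (mod p^e)" by (intro cong_add) (auto simp: cong_0_iff)
    thus ?thesis unfolding \<beta>_def by simp
  qed
  have dvdN: "p^e dvd N" unfolding N_def by (simp add: le_imp_power_dvd)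
  have lowcong: "[\<alpha>^k = \<alpha>^(k mod M mod \<gamma>)] (mod p^e)" for k
  proof -
    define q where "q = k mod M div \<gamma>"
    define r where "r = k mod M mod \<gamma>"
    have km: "k mod M = \<gamma> * q + r" unfolding q_def r_def by simp
    have "[\<alpha>^k = \<alpha>^(k mod M)] (mod p^e)" using red dvdN cong_dvd_modulus_nat by blast
    also have "\<alpha>^(k mod M) = \<beta>^q * \<alpha>^r" using km split by simp
    also have "[\<beta>^q * \<alpha>^r = 1^q * \<alpha>^r] (mod p^e)"
      by (intro cong_mult cong_pow b1 cong_refl)
    finally show ?thesis unfolding r_def by simp
  qed
  define S where "S = {k. k < s * M \<and> num_large_digits p (\<alpha>^k) < 1}"
  define R where "R = {r. r < \<gamma> \<and> 2 * (\<alpha>^r mod p) < p}"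
  define D where "D = PiE {..<t} (\<lambda>_. {..<(p+1) div 2})"
  define \<phi> where "\<phi> k = (k div M, k mod M mod \<gamma>, \<lambda>i\<in>{..<t}. dig p (\<alpha>^k) (e+i))" for k
  have p2: "p \<ge> 2" using p1 by simp
  have M0: "M > 0" unfolding M_def using \<gamma>0 p1 by simp
  have img: "\<phi> ` S \<subseteq> {..<s} \<times> R \<times> D"
  proof (rule image_subsetI)
    fix k assume k: "k \<in> S"
    have kS: "k < s * M" "num_large_digits p (\<alpha>^k) < 1" using k unfolding S_def by auto
    have small: "2 * dig p (\<alpha>^k) i < p" for i
      using kS(2) by (rule dig_small[OF p2])
    have small2: "dig p (\<alpha>^k) i < (p+1) div 2" for i
      using small[of i] by presburger
    have "k div M < s" using kS(1) by (rule less_mult_imp_div_less)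
    moreover have "k mod M mod \<gamma> \<in> R"
    proof -
      have pd: "p dvd p^e" using e1 by simp
      have "[\<alpha>^k = \<alpha>^(k mod M mod \<gamma>)] (mod p)"
        using cong_dvd_modulus_nat[OF lowcong pd] .
      hence "\<alpha>^(k mod M mod \<gamma>) mod p = dig p (\<alpha>^k) 0" by (simp add: cong_def dig_def)
      thus ?thesis unfolding R_def using small[of 0] \<gamma>0 by simp
    qed
    moreover have "(\<lambda>i\<in>{..<t}. dig p (\<alpha>^k) (e+i)) \<in> D"
      unfolding D_def using small2 by auto
    ultimately show "\<phi> k \<in> {..<s} \<times> R \<times> D" unfolding \<phi>_def by simp
  qed
  have inj: "inj_on \<phi> S"
  proof (rule inj_onI)
    fix k1 k2 assume k1: "k1 \<in> S" and k2: "k2 \<in> S" and eq: "\<phi> k1 = \<phi> k2"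
    have dv: "k1 div M = k2 div M" and rr: "k1 mod M mod \<gamma> = k2 mod M mod \<gamma>"
      and ff: "(\<lambda>i\<in>{..<t}. dig p (\<alpha>^k1) (e+i)) = (\<lambda>i\<in>{..<t}. dig p (\<alpha>^k2) (e+i))"
      using eq unfolding \<phi>_def by auto
    define r where "r = k1 mod M mod \<gamma>"
    have digs: "dig p (\<alpha>^k1) i = dig p (\<alpha>^k2) i" if i: "i < e + t" for i
    proof (cases "i < e")
      case True
      have "dig p (\<alpha>^k1) i = dig p (\<alpha>^k1 mod p^e) i" using dig_mod True p1 by simp
      also have "\<alpha>^k1 mod p^e = \<alpha>^r mod p^e" using lowcong[of k1] unfolding r_def cong_def .
      also have "\<alpha>^r mod p^e = \<alpha>^k2 mod p^e" using lowcong[of k2] rr unfolding r_def cong_def by simp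
      also have "dig p (\<alpha>^k2 mod p^e) i = dig p (\<alpha>^k2) i" using dig_mod True p1 by simp
      finally show ?thesis .
    next
      case False
      hence "i - e < t" using i by simp
      hence "(\<lambda>i\<in>{..<t}. dig p (\<alpha>^k1) (e+i)) (i - e) = (\<lambda>i\<in>{..<t}. dig p (\<alpha>^k2) (e+i)) (i - e)"
        using ff by simp
      thus ?thesis using False \<open>i - e < t\<close> by simp
    qed
    have "\<alpha>^k1 mod N = \<alpha>^k2 mod N" unfolding N_def
      using dig_eq_mod[of p "e+t"] digs p1 by auto
    hence c0: "[\<alpha>^(k1 mod M) = \<alpha>^(k2 mod M)] (mod N)"
      using red[of k1] red[of k2] unfolding cong_def by simp
    define q1 where "q1 = k1 mod M div \<gamma>"
    define q2 where "q2 = k2 mod M div \<gamma>"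
    have e1': "k1 mod M = \<gamma> * q1 + r" unfolding q1_def r_def by simp
    have e2': "k2 mod M = \<gamma> * q2 + r" unfolding q2_def r_def using rr by simp
    have "[\<beta>^q1 * \<alpha>^r = \<beta>^q2 * \<alpha>^r] (mod N)"
      using c0 unfolding e1' e2' split .
    moreover have "coprime (\<alpha>^r) N" using copN by (simp add: coprime_commute)
    ultimately have "[\<beta>^q1 = \<beta>^q2] (mod N)" using cong_mult_rcancel_nat by blast
    hence qc: "[q1 = q2] (mod p^t)" using order_divides_expdiff[OF copNb] ordb by simp
    have lt: "k mod M < p^t * \<gamma>" for k
      using mod_less_divisor[OF M0, of k] unfolding M_def by (simp add: mult.commute)
    have "q1 < p^t" unfolding q1_def by (rule less_mult_imp_div_less[OF lt])
    moreover have "q2 < p^t" unfolding q2_def by (rule less_mult_imp_div_less[OF lt])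
    ultimately have "q1 = q2" using cong_less_modulus_unique_nat qc by blast
    hence "k1 mod M = k2 mod M" using rr unfolding q1_def q2_def
      by (metis div_mult_mod_eq)
    thus "k1 = k2" using dv by (metis div_mult_mod_eq)
  qed
  have finD: "finite D" unfolding D_def by (simp add: finite_PiE)
  have finR: "finite R" unfolding R_def by simp
  have "card S \<le> card ({..<s} \<times> R \<times> D)"
    by (rule card_inj_on_le[OF inj img]) (simp add: finD finR)
  also have "\<dots> = s * card R * ((p+1) div 2)^t"
    unfolding D_def by (simp add: card_cartesian_product card_PiE)
  finally have c1: "real (card S) \<le> real s * real (card R) * real ((p+1) div 2) ^ t"
    by (metis of_nat_le_iff of_nat_mult of_nat_power)
  have cR: "card R \<le> theta p \<alpha>" unfolding R_def \<gamma>_def by (rule card_R_le[OF p1 cop])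
  have h: "real ((p+1) div 2) = (real p + 1) / 2"
    using assms(2) by (subst real_of_nat_div) auto
  have Sc: "S_count p \<alpha> 1 (s * ord p \<alpha> * p ^ t) = card S"
    unfolding S_count_def S_def M_def \<gamma>_def by (simp add: mult.assoc)
  have "real s * real (card R) * real ((p+1) div 2) ^ t
      \<le> real s * real (theta p \<alpha>) * real ((p+1) div 2) ^ t"
    using cR by (intro mult_right_mono mult_left_mono) auto
  with c1 have "real (card S) \<le> real s * real (theta p \<alpha>) * real ((p+1) div 2) ^ t"
    by linarith
  thus ?thesis by (simp only: Sc h)
qed

end
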